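(* Let $1\le n\le N$. For every $x$ at which $\mathscr C_{1,n}(x)$ and $\mathscr D_{1,n}(x)$ are defined, $\mathscr D_{1,n}(x)\neq0$, and $f_n(x)-1\notin\{0,-1,\dots,-(n-1)\}$, where $$f_n(x)=\frac{np(N-n+1)\,\mathscr C_{1,n}(x)}{\mathscr D_{1,n}(x)}-n+1,$$ one has $$\mathbb K_n(x)=p^{n-1}(-N)_{n-1}\,h_n(x)\sum_{k=0}^{n}\frac{(-n)_k(-x)_k\,(f_n(x))_k}{(-N)_k\,(f_n(x)-1)_k}\frac{p^{-k}}{k!},\qquad h_n(x)=-\big(p(N-n+1)\,\mathscr C_{1,n}(x)-\mathscr D_{1,n}(x)\big),$$ i.e. $\mathbb K_n(x)=p^{n-1}(-N)_{n-1}h_n(x)\,{}_3F_2\!\left(-n,-x,f_n(x);-N,f_n(x)-1;p^{-1}\right)$ (terminating series).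
   Context: Fix an integer $N\ge 1$ and $0<p<1$. Notation: $(a)_0=1$, $(a)_k=a(a+1)\cdots(a+k-1)$ (Pochhammer symbol); $[z]_0=1$, $[z]_k=z(z-1)\cdots(z-k+1)$ (falling factorial). For a function $f$, $\Delta f(x)=f(x+1)-f(x)$, $\nabla f(x)=f(x)-f(x-1)$, $\Delta^0$ is the identity and $\Delta^k=\Delta\circ\Delta^{k-1}$. For $0\le n\le N$ the monic Kravchuk polynomial is $K_n(x)=p^n(-N)_n\sum_{k=0}^{n}\frac{(-n)_k(-x)_k}{(-N)_k\,k!}p^{-k}$, and $K_{-1}=0$; these are monic of degree $n$ and orthogonal on $\{0,\dots,N\}$ with respect to the binomial weight $w(x)=\binom{N}{x}p^x(1-p)^{N-x}$, with $\|K_n\|^2=\sum_{x=0}^N K_n(x)^2w(x)=n!(-N)_np^n(p-1)^n$. For $1\le n\le N+1$ and integers $i,l\ge0$, $\mathscr K_{n-1}^{(i,l)}(x,y)=\sum_{k=0}^{n-1}\frac{\Delta^iK_k(x)\,\Delta^lK_k(y)}{\|K_k\|^2}$. Fix $\lambda,\mu>0$ and an integer $j\ge 0$. On real polynomials define $\langle f,g\rangle_{\lambda,\mu}=\sum_{x=0}^N f(x)g(x)w(x)+\lambda\Delta^jf(0)\Delta^jg(0)+\mu\Delta^jf(N)\Delta^jg(N)$. For $0\le n\le N$, $\mathbb K_n=\mathbb K_n^{(j)}$ is the monic polynomial of degree $n$ with $\langle\mathbb K_n,q\rangle_{\lambda,\mu}=0$ for all polynomials $q$ of degree $<n$ (Kravchuk–Sobolev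 polynomials). For $1\le n\le N$: $\mathscr A_n(x,y)=\frac{j!}{\|K_{n-1}\|^2[x-y]_{j+1}}\sum_{k=0}^{j}\frac{\Delta^kK_{n-1}(y)}{k!}[x-y]_k$, $\mathscr B_n(x,y)=-\frac{j!}{\|K_{n-1}\|^2[x-y]_{j+1}}\sum_{k=0}^{j}\frac{\Delta^kK_{n}(y)}{k!}[x-y]_k$; $k_{00}=\mathscr K^{(j,j)}_{n-1}(0,0)$, $k_{0N}=\mathscr K^{(j,j)}_{n-1}(0,N)$, $k_{N0}=\mathscr K^{(j,j)}_{n-1}(N,0)$, $k_{NN}=\mathscr K^{(j,j)}_{n-1}(N,N)$, $d_0=\Delta^jK_n(0)$, $d_N=\Delta^jK_n(N)$, $\delta_n=(1+\lambda k_{00})(1+\mu k_{NN})-\lambda\mu k_{0N}k_{N0}$ (which is nonzero), $\Phi_1(n)=\frac{d_0(1+\mu k_{NN})-\mu k_{0N}d_N}{\delta_n}$, $\Phi_2(n)=\frac{(1+\lambda k_{00})d_N-\lambda k_{N0}d_0}{\delta_n}$; $\mathscr C_{1,n}(x)=1-\lambda\Phi_1(n)\mathscr A_n(x,0)-\mu\Phi_2(n)\mathscr A_n(x,N)$ and $\mathscr D_{1,n}(x)=-\lambda\Phi_1(n)\mathscr B_n(x,0)-\mu\Phi_2(n)\mathscr B_n(x,N)$. *)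

theory Defs
  imports Complex_Main "HOL-Computational_Algebra.Polynomial"
begin

definition falling :: "real \<Rightarrow> nat \<Rightarrow> real" where
  "falling z k = (\<Prod>i<k. z - real i)"

definition fdiff :: "nat \<Rightarrow> (real \<Rightarrow> real) \<Rightarrow> real \<Rightarrow> real" where
  "fdiff k f = ((\<lambda>g. \<lambda>x. g (x + 1) - g x) ^^ k) f"

definition binw :: "nat \<Rightarrow> real \<Rightarrow> nat \<Rightarrow> real" where
  "binw N p x = real (N choose x) * p ^ x * (1 - p) ^ (N - x)"

text \<open>Monic Kravchuk polynomial K_n(x) (for 0 <= n <= N).\<close>
definition kraw :: "nat \<Rightarrow> real \<Rightarrow> nat \<Rightarrow> real \<Rightarrow> real" where
  "kraw N p n x = p ^ n * pochhammer (- real N) n *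
     (\<Sum>k\<le>n. pochhammer (- real n) k * pochhammer (- x) k
              / (pochhammer (- real N) k * fact k) * (1 / p) ^ k)"

definition krawnorm :: "nat \<Rightarrow> real \<Rightarrow> nat \<Rightarrow> real" where
  "krawnorm N p n = (\<Sum>x\<le>N. (kraw N p n (real x))^2 * binw N p x)"

definition kernel :: "nat \<Rightarrow> real \<Rightarrow> nat \<Rightarrow> nat \<Rightarrow> nat \<Rightarrow> real \<Rightarrow> real \<Rightarrow> real" where
  "kernel N p n i l x y = (\<Sum>k<n. fdiff i (kraw N p k) x * fdiff l (kraw N p k) y / krawnorm N p k)"

definition sobIP :: "nat \<Rightarrow> real \<Rightarrow> real \<Rightarrow> real \<Rightarrow> nat \<Rightarrow> real poly \<Rightarrow> real poly \<Rightarrow> real" where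
  "sobIP N p lam mu j f g =
     (\<Sum>x\<le>N. poly f (real x) * poly g (real x) * binw N p x)
     + lam * fdiff j (poly f) 0 * fdiff j (poly g) 0
     + mu * fdiff j (poly f) (real N) * fdiff j (poly g) (real N)"

definition KS :: "nat \<Rightarrow> real \<Rightarrow> real \<Rightarrow> real \<Rightarrow> nat \<Rightarrow> nat \<Rightarrow> real poly" where
  "KS N p lam mu j n = (THE q. degree q = n \<and> lead_coeff q = 1 \<and>
       (\<forall>r. degree r < n \<longrightarrow> sobIP N p lam mu j q r = 0))"

definition calA :: "nat \<Rightarrow> real \<Rightarrow> nat \<Rightarrow> nat \<Rightarrow> real \<Rightarrow> real \<Rightarrow> real" where
  "calA N p j n x y = fact j / (krawnorm N p (n - 1) * falling (x - y) (j + 1)) *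
     (\<Sum>k\<le>j. fdiff k (kraw N p (n - 1)) y / fact k * falling (x - y) k)"

definition calB :: "nat \<Rightarrow> real \<Rightarrow> nat \<Rightarrow> nat \<Rightarrow> real \<Rightarrow> real \<Rightarrow> real" where
  "calB N p j n x y = - (fact j / (krawnorm N p (n - 1) * falling (x - y) (j + 1)) *
     (\<Sum>k\<le>j. fdiff k (kraw N p n) y / fact k * falling (x - y) k))"

definition deltaS :: "nat \<Rightarrow> real \<Rightarrow> real \<Rightarrow> real \<Rightarrow> nat \<Rightarrow> nat \<Rightarrow> real" where
  "deltaS N p lam mu j n =
     (1 + lam * kernel N p n j j 0 0) * (1 + mu * kernel N p n j j (real N) (real N))
     - lam * mu * kernel N p n j j 0 (real N) * kernel N p n j j (real N) 0"

definition Phi1 :: "nat \<Rightarrow> real \<Rightarrow> real \<Rightarrow> real \<Rightarrow> nat \<Rightarrow> nat \<Rightarrow> real" where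
  "Phi1 N p lam mu j n =
     (fdiff j (kraw N p n) 0 * (1 + mu * kernel N p n j j (real N) (real N))
      - mu * kernel N p n j j 0 (real N) * fdiff j (kraw N p n) (real N)) / deltaS N p lam mu j n"

definition Phi2 :: "nat \<Rightarrow> real \<Rightarrow> real \<Rightarrow> real \<Rightarrow> nat \<Rightarrow> nat \<Rightarrow> real" where
  "Phi2 N p lam mu j n =
     ((1 + lam * kernel N p n j j 0 0) * fdiff j (kraw N p n) (real N)
      - lam * kernel N p n j j (real N) 0 * fdiff j (kraw N p n) 0) / deltaS N p lam mu j n"

definition calC1 :: "nat \<Rightarrow> real \<Rightarrow> real \<Rightarrow> real \<Rightarrow> nat \<Rightarrow> nat \<Rightarrow> real \<Rightarrow> real" where
  "calC1 N p lam mu j n x = 1 - lam * Phi1 N p lam mu j n * calA N p j n x 0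
                              - mu * Phi2 N p lam mu j n * calA N p j n x (real N)"

definition calD1 :: "nat \<Rightarrow> real \<Rightarrow> real \<Rightarrow> real \<Rightarrow> nat \<Rightarrow> nat \<Rightarrow> real \<Rightarrow> real" where
  "calD1 N p lam mu j n x = - lam * Phi1 N p lam mu j n * calB N p j n x 0
                              - mu * Phi2 N p lam mu j n * calB N p j n x (real N)"

end

theory Submission
  imports Defs
begin


lemma fdiff_0[simp]: "fdiff 0 f = f" by (simp add: fdiff_def)

lemma fdiff_Suc: "fdiff (Suc j) f x = fdiff j f (x + 1) - fdiff j f x"
  by (simp add: fdiff_def)

lemma fdiff_local:
  assumes "\<And>i. i \<le> j \<Longrightarrow> f (y + real i) = g (y + real i)"
  shows "fdiff j f y = fdiff j g y"
  using assms
proof (induction j arbitrary: y)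
  case 0 then show ?case using 0[of 0] by simp
next
  case (Suc j)
  have a: "fdiff j f (y+1) = fdiff j g (y+1)"
  proof (rule Suc.IH)
    fix i assume "i \<le> j"
    then have "Suc i \<le> Suc j" by simp
    from Suc.prems[OF this] show "f (y + 1 + real i) = g (y + 1 + real i)" by (simp add: algebra_simps)
  qed
  have b: "fdiff j f y = fdiff j g y"
    using Suc.prems by (intro Suc.IH) auto
  show ?case by (simp add: fdiff_Suc a b)
qed

lemma fdiff_add: "fdiff j (\<lambda>x. f x + g x) y = fdiff j f y + fdiff j g y"
  by (induction j arbitrary: y) (simp_all add: fdiff_Suc)

lemma fdiff_diff: "fdiff j (\<lambda>x. f x - g x) y = fdiff j f y - fdiff j g y"
  by (induction j arbitrary: y) (simp_all add: fdiff_Suc)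

lemma fdiff_cmult: "fdiff j (\<lambda>x. c * f x) y = c * fdiff j f y"
  by (induction j arbitrary: y) (simp_all add: fdiff_Suc right_diff_distrib)

lemma fdiff_const0: "fdiff j (\<lambda>x. c) y = (if j = 0 then c else 0)"
  by (induction j arbitrary: y) (simp_all add: fdiff_Suc)

lemma fdiff_const: "fdiff (Suc j) (\<lambda>x. c) y = 0"
  by (simp add: fdiff_const0)

lemma fdiff_sum: "fdiff j (\<lambda>x. \<Sum>k\<in>A. f k x) y = (\<Sum>k\<in>A. fdiff j (f k) y)"
proof (induction A rule: infinite_finite_induct)
  case (infinite A) then show ?case
    by (cases j) (simp_all add: fdiff_const)
next
  case empty then show ?case
    by (cases j) (simp_all add: fdiff_const)
next
  case (insert a A)
  then show ?case by (simp add: fdiff_add)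
qed

lemma falling_Suc: "falling z (Suc k) = falling z k * (z - real k)"
  by (simp add: falling_def)

lemma falling_Suc': "falling z (Suc k) = z * falling (z - 1) k"
  unfolding falling_def prod.lessThan_Suc_shift by (simp add: algebra_simps)

lemma falling_0[simp]: "falling z 0 = 1" by (simp add: falling_def)

lemma L_aux1:
  fixes F a b c z r :: real assumes "F \<noteq> 0" "r + 1 \<noteq> 0"
  shows "a * c / F + (a + b) * (c * (z - (r + 1))) / ((r + 1) * F)
       = z * (a * c / ((r + 1) * F)) + b * (c * (z - (r + 1))) / ((r + 1) * F)"
proof -
  define u where "u = a * c / ((r + 1) * F)"
  have 1: "a * c / F = (r+1) * u" using assms by (simp add: u_def)
  have 2: "(a + b) * (c * (z - (r + 1))) / ((r + 1) * F) = (z - (r+1)) * u + b * (c * (z - (r + 1))) / ((r + 1) * F)"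
    by (simp add: u_def distrib_right add_divide_distrib)
  show ?thesis unfolding 1 2 u_def[symmetric] by (simp add: algebra_simps)
qed

lemma L_alg:
  fixes g :: "nat \<Rightarrow> real"
  shows "(\<Sum>k\<le>j. (g k + g (Suc k)) * falling z (Suc k) / fact k)
       = z * (\<Sum>k\<le>j. g k * falling z k / fact k) + g (Suc j) * falling z (Suc j) / fact j"
proof (induction j)
  case 0 then show ?case by (simp add: falling_def algebra_simps)
next
  case (Suc j)
  have fs: "fact (Suc j) = (real j + 1) * (fact j :: real)" by simp
  have F: "(fact j::real) \<noteq> 0" by simp
  have e: "g (Suc j) * falling z (Suc j) / fact j
     + (g (Suc j) + g (Suc (Suc j))) * falling z (Suc (Suc j)) / fact (Suc j)
     = z * (g (Suc j) * falling z (Suc j) / fact (Suc j))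
       + g (Suc (Suc j)) * falling z (Suc (Suc j)) / fact (Suc j)"
    unfolding fs falling_Suc[of z "Suc j"] of_nat_Suc
    using L_aux1[OF F, of "real j"] by (simp add: add.commute)
  have "(\<Sum>k\<le>Suc j. (g k + g (Suc k)) * falling z (Suc k) / fact k)
      = z * (\<Sum>k\<le>j. g k * falling z k / fact k) + (g (Suc j) * falling z (Suc j) / fact j
     + (g (Suc j) + g (Suc (Suc j))) * falling z (Suc (Suc j)) / fact (Suc j))"
    by (simp only: sum.atMost_Suc Suc.IH add.assoc)
  also have "\<dots> = z * (\<Sum>k\<le>Suc j. g k * falling z k / fact k) + g (Suc (Suc j)) * falling z (Suc (Suc j)) / fact (Suc j)"
    unfolding e by (simp only: sum.atMost_Suc[of _ j] distrib_left add.assoc)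
  finally show ?case .
qed

lemma L_aux2:
  fixes F S a c z r :: real assumes "F \<noteq> 0" "1 + r \<noteq> 0"
  shows "z * S + a * c / F - (z - (1 + r)) * S = (1 + r) * (S + a / ((1 + r) * F) * c)"
proof -
  have "(1 + r) * (a / ((1 + r) * F) * c) = a * c / F" using assms by simp
  then show ?thesis by (simp add: distrib_left algebra_simps)
qed

lemma L_aux3:
  fixes A B D z w S1 S2 T F r :: real
  assumes "A \<noteq> 0" "B \<noteq> 0" "D = z * A" "D = B * w" "z * S1 - w * S2 = r * T" "D \<noteq> 0"
  shows "F / A * S1 - F / B * S2 = (r * F) / D * T"
proof -
  have z: "z \<noteq> 0" "w \<noteq> 0" using assms by auto
  have 1: "F / A * S1 = F * (z * S1) / D" unfolding assms(3) using assms(1) z by simp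
  have 2: "F / B * S2 = F * (w * S2) / D" unfolding assms(4) using assms(2) z by simp
  have "F / A * S1 - F / B * S2 = F * (z * S1 - w * S2) / D"
    unfolding 1 2 by (simp add: diff_divide_distrib right_diff_distrib)
  also have "\<dots> = (r * F) / D * T" unfolding assms(5) by simp
  finally show ?thesis .
qed

lemma L_main:
  fixes G :: "real \<Rightarrow> real"
  assumes "falling (x - y) (j + 1) \<noteq> 0"
  shows "fdiff j (\<lambda>t. G t / (x - t)) y =
     fact j / falling (x - y) (j + 1) * (\<Sum>k\<le>j. fdiff k G y / fact k * falling (x - y) k)"
  using assms
proof (induction j arbitrary: y)
  case 0 then show ?case by (simp add: falling_def)
next
  case (Suc j)
  define z where "z = x - y"
  have fz: "falling z (Suc (Suc j)) \<noteq> 0" using Suc.prems by (simp add: z_def)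
  have f1: "falling z (Suc j) \<noteq> 0" using fz by (simp add: falling_Suc)
  have f2: "falling (z - 1) (Suc j) \<noteq> 0" using fz by (simp add: falling_Suc')
  have z0: "z \<noteq> 0" using fz by (simp add: falling_Suc')
  have zj: "z - real (Suc j) \<noteq> 0" using fz by (simp only: falling_Suc[of z "Suc j"]) simp
  have IH1: "fdiff j (\<lambda>t. G t / (x - t)) (y + 1) =
     fact j / falling (z - 1) (j + 1) * (\<Sum>k\<le>j. fdiff k G (y+1) / fact k * falling (z - 1) k)"
    using Suc.IH[of "y+1"] f2 by (simp add: z_def diff_diff_eq)
  have IH2: "fdiff j (\<lambda>t. G t / (x - t)) y =
     fact j / falling z (j + 1) * (\<Sum>k\<le>j. fdiff k G y / fact k * falling z k)"
    using Suc.IH[of y] f1 by (simp add: z_def)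
  define g where "g k = fdiff k G y" for k
  have g1: "fdiff k G (1+y) = g k + g (Suc k)" for k by (simp add: g_def fdiff_Suc add.commute)
  have s1: "z * (\<Sum>k\<le>j. fdiff k G (y+1) / fact k * falling (z - 1) k)
      = (\<Sum>k\<le>j. (g k + g (Suc k)) * falling z (Suc k) / fact k)"
    by (simp add: sum_distrib_left g1 falling_Suc' field_simps)
  have sw: "(\<Sum>k\<le>j. g k / fact k * falling z k) = (\<Sum>k\<le>j. g k * falling z k / fact k)"
    by (simp add: field_simps)
  have fs: "fact (Suc j) = (1 + real j) * (fact j :: real)" by simp
  have key: "z * (\<Sum>k\<le>j. fdiff k G (y+1) / fact k * falling (z - 1) k) - (z - real (Suc j)) * (\<Sum>k\<le>j. g k / fact k * falling z k)
      = real (Suc j) * (\<Sum>k\<le>Suc j. g k / fact k * falling z k)"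
  proof -
    have "z * (\<Sum>k\<le>j. fdiff k G (y+1) / fact k * falling (z - 1) k) - (z - real (Suc j)) * (\<Sum>k\<le>j. g k / fact k * falling z k)
      = z * (\<Sum>k\<le>j. g k * falling z k / fact k) + g (Suc j) * falling z (Suc j) / fact j - (z - (1 + real j)) * (\<Sum>k\<le>j. g k * falling z k / fact k)"
      unfolding s1 L_alg sw by simp
    also have "\<dots> = (1 + real j) * ((\<Sum>k\<le>j. g k * falling z k / fact k) + g (Suc j) / ((1 + real j) * fact j) * falling z (Suc j))"
      by (rule L_aux2) simp_all
    also have "\<dots> = real (Suc j) * (\<Sum>k\<le>Suc j. g k / fact k * falling z k)"
      unfolding sum.atMost_Suc sw fs by simp
    finally show ?thesis .
  qed
  have FF1: "falling z (Suc (Suc j)) = z * falling (z - 1) (Suc j)" by (rule falling_Suc')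
  have FF2: "falling z (Suc (Suc j)) = falling z (Suc j) * (z - real (Suc j))" by (rule falling_Suc)
  have IH2': "fdiff j (\<lambda>t. G t / (x - t)) y =
     fact j / falling z (j + 1) * (\<Sum>k\<le>j. g k / fact k * falling z k)"
    using IH2 by (simp add: g_def)
  show ?case
    unfolding fdiff_Suc IH1 IH2' z_def[symmetric] Suc_eq_plus1[symmetric] g_def[symmetric] fact_Suc[of j]
    by (rule L_aux3[OF f2 f1 FF1 FF2 key fz])
qed



lemma fin_alg:
  fixes a c C D S S' n :: real
  assumes "D \<noteq> 0" "n \<noteq> 0" "n * a * C / D - n + 1 - 1 \<noteq> 0"
  shows "C * (-a * c * S) + D * (c * S') = c * (-(a * C - D)) * (S + n * (S - S') / (n * a * C / D - n + 1 - 1))"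
proof -
  have e: "n * a * C / D - n + 1 - 1 = n * (a * C - D) / D" using assms(1) by (simp add: field_simps)
  have q: "a * C - D \<noteq> 0" using assms(3) unfolding e by auto
  have e2: "n * (S - S') / (n * a * C / D - n + 1 - 1) = (S - S') * D / (a * C - D)"
    unfolding e using assms(1,2) q by (simp add: field_simps)
  show ?thesis unfolding e2 using q by (simp add: field_simps)
qed

lemma poch_shift_ratio:
  fixes f :: real
  assumes "f - 1 \<noteq> 0" "pochhammer (f - 1) k \<noteq> 0"
  shows "pochhammer f k / pochhammer (f - 1) k = (f - 1 + real k) / (f - 1)"
proof -
  have "pochhammer (f - 1) (Suc k) = (f - 1) * pochhammer f k"
    by (simp add: pochhammer_rec)
  moreover have "pochhammer (f - 1) (Suc k) = pochhammer (f - 1) k * (f - 1 + real k)"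
    by (simp add: pochhammer_Suc)
  ultimately show ?thesis using assms by (simp add: field_simps)
qed

lemma poch_k_mult:
  "real k * pochhammer (- real n) k = real n * (pochhammer (- real n) k - pochhammer (- real n + 1) k)"
proof (cases k)
  case 0 then show ?thesis by simp
next
  case (Suc m)
  have 1: "pochhammer (- real n) (Suc m) = - real n * pochhammer (- real n + 1) m" by (simp add: pochhammer_rec)
  have 2: "pochhammer (- real n + 1) (Suc m) = pochhammer (- real n + 1) m * (- real n + 1 + real m)" by (simp add: pochhammer_Suc)
  show ?thesis unfolding Suc 1 2 by (simp add: algebra_simps)
qed

lemma hyp_part:
  fixes N n :: nat and p x C D :: real
  assumes n1: "1 \<le> n" and nN: "n \<le> N" and p0: "p \<noteq> 0" and D0: "D \<noteq> 0"
    and ff: "\<forall>i<n. (real n * p * real (N - n + 1) * C / D - real n + 1) - 1 \<noteq> - real i"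
  shows "C * kraw N p n x + D * kraw N p (n - 1) x =
    (let f = real n * p * real (N - n + 1) * C / D - real n + 1;
         h = - (p * real (N - n + 1) * C - D)
     in p ^ (n - 1) * pochhammer (- real N) (n - 1) * h *
       (\<Sum>k\<le>n. pochhammer (- real n) k * pochhammer (- x) k * pochhammer f k
                / (pochhammer (- real N) k * pochhammer (f - 1) k) * (1 / p) ^ k / fact k))"
proof -
  define a where "a = p * real (N - n + 1)"
  define f where "f = real n * a * C / D - real n + 1"
  define c where "c = p ^ (n - 1) * pochhammer (- real N) (n - 1)"
  define t where "t k = pochhammer (- real n) k * pochhammer (- x) k / (pochhammer (- real N) k * fact k) * (1 / p) ^ k" for k
  define t' where "t' k = pochhammer (- real n + 1) k * pochhammer (- x) k / (pochhammer (- real N) k * fact k) * (1 / p) ^ k" for k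
  define S where "S = (\<Sum>k\<le>n. t k)"
  define S' where "S' = (\<Sum>k\<le>n. t' k)"
  have f1: "f - 1 \<noteq> 0" using ff n1 by (auto simp: f_def a_def mult.assoc)
  have fk: "pochhammer (f - 1) k \<noteq> 0" if "k \<le> n" for k
  proof
    assume "pochhammer (f - 1) k = 0"
    then obtain i where i: "i < k" "f - 1 = - real i" by (auto simp: pochhammer_eq_0_iff)
    have "i < n" using i(1) that by simp
    with ff have "f - 1 \<noteq> - real i" by (simp add: f_def a_def mult.assoc)
    then show False using i(2) by simp
  qed
  have sum_eq: "(\<Sum>k\<le>n. pochhammer (- real n) k * pochhammer (- x) k * pochhammer f k
                / (pochhammer (- real N) k * pochhammer (f - 1) k) * (1 / p) ^ k / fact k)
        = (\<Sum>k\<le>n. t k * ((f - 1 + real k) / (f - 1)))"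
  proof (rule sum.cong[OF refl])
    fix k assume "k \<in> {..n}"
    then have r: "pochhammer f k / pochhammer (f - 1) k = (f - 1 + real k) / (f - 1)"
      using poch_shift_ratio[OF f1 fk] by auto
    show "pochhammer (- real n) k * pochhammer (- x) k * pochhammer f k
                / (pochhammer (- real N) k * pochhammer (f - 1) k) * (1 / p) ^ k / fact k
        = t k * ((f - 1 + real k) / (f - 1))"
      unfolding t_def r[symmetric] by (simp add: field_simps)
  qed
  have sum2: "(\<Sum>k\<le>n. t k * ((f - 1 + real k) / (f - 1))) = S + (\<Sum>k\<le>n. real k * t k) / (f - 1)"
    unfolding S_def using f1
    by (simp add: sum_distrib_left sum_divide_distrib sum.distrib[symmetric] field_simps)
  have sum3: "(\<Sum>k\<le>n. real k * t k) = real n * (S - S')"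
    unfolding S_def S'_def sum_subtractf[symmetric] sum_distrib_left
  proof (rule sum.cong[OF refl])
    fix k
    define R where "R = pochhammer (- x) k / (pochhammer (- real N) k * fact k) * (1 / p) ^ k"
    have 1: "t k = pochhammer (- real n) k * R" unfolding t_def R_def by (simp add: field_simps)
    have 2: "t' k = pochhammer (- real n + 1) k * R" unfolding t'_def R_def by (simp add: field_simps)
    show "real k * t k = real n * (t k - t' k)"
      unfolding 1 2 using poch_k_mult[of k n]
      by (metis (no_types, lifting) mult.assoc right_diff_distrib' left_diff_distrib')
  qed
  have Kn: "kraw N p n x = - a * c * S"
  proof -
    have P0: "pochhammer (- real N) (Suc (n-1)) = pochhammer (- real N) (n-1) * (- real N + real (n-1))"
      by (rule pochhammer_Suc)
    have Sn: "Suc (n-1) = n" using n1 by simp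
    have r: "- real N + real (n - 1) = - real (N - n + 1)" using n1 nN by (simp add: of_nat_diff)
    have P: "pochhammer (- real N) n = pochhammer (- real N) (n - 1) * (- real (N - n + 1))"
      using P0 unfolding Sn r .
    have pp: "p ^ n = p * p ^ (n - 1)" using Sn power_Suc[of p "n-1"] by simp
    have "kraw N p n x = p ^ n * pochhammer (- real N) n * S"
      unfolding kraw_def S_def t_def by simp
    also have "\<dots> = - a * c * S" unfolding P pp a_def c_def by (simp add: algebra_simps)
    finally show ?thesis .
  qed
  have Kn1: "kraw N p (n - 1) x = c * S'"
  proof -
    have rn: "- real (n - 1) = - real n + 1" using n1 by simp
    have z: "pochhammer (- real n + 1) n = 0"
      using pochhammer_of_nat_eq_0_lemma[of "n - 1" n, where 'a=real] n1 by (simp add: rn)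
    have "S' = (\<Sum>k\<le>n - 1. t' k)"
    proof -
      have e: "{..n} = insert n {..n-1}" using n1 by auto
      have "t' n = 0" unfolding t'_def z by simp
      then show ?thesis unfolding S'_def e using n1 by (subst sum.insert) auto
    qed
    then show ?thesis unfolding kraw_def c_def t'_def rn by simp
  qed
  have main: "C * (-a * c * S) + D * (c * S') = c * (-(a * C - D)) * (S + real n * (S - S') / (real n * a * C / D - real n + 1 - 1))"
    by (rule fin_alg[OF D0]) (use n1 f1 in \<open>simp_all add: f_def\<close>)
  show ?thesis
    unfolding Let_def Kn Kn1 a_def[symmetric] mult.assoc[of "real n" p] f_def[symmetric] c_def[symmetric] sum_eq sum2 sum3
    using main[folded f_def] by (simp only: mult.assoc)
qed



definition lowdeg :: "real poly \<Rightarrow> nat \<Rightarrow> bool" where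
  "lowdeg q n \<longleftrightarrow> (\<forall>i\<ge>n. coeff q i = 0)"

lemma lowdeg_add: "lowdeg a n \<Longrightarrow> lowdeg b n \<Longrightarrow> lowdeg (a + b) n"
  by (simp add: lowdeg_def)
lemma lowdeg_diff: "lowdeg a n \<Longrightarrow> lowdeg b n \<Longrightarrow> lowdeg (a - b) n"
  by (simp add: lowdeg_def)
lemma lowdeg_smult: "lowdeg a n \<Longrightarrow> lowdeg (smult c a) n"
  by (simp add: lowdeg_def)
lemma lowdeg_mono: "lowdeg a m \<Longrightarrow> m \<le> n \<Longrightarrow> lowdeg a n"
  by (simp add: lowdeg_def)
lemma lowdeg_sum: "(\<And>k. k \<in> A \<Longrightarrow> lowdeg (f k) n) \<Longrightarrow> lowdeg (\<Sum>k\<in>A. f k) n"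
  by (simp add: lowdeg_def coeff_sum)
lemma lowdeg_0: "lowdeg a 0 \<Longrightarrow> a = 0"
  by (rule poly_eqI) (simp add: lowdeg_def)
lemma lowdeg_zero[simp]: "lowdeg 0 n" by (simp add: lowdeg_def)
lemma lowdeg_degree: "degree a < n \<Longrightarrow> lowdeg a n"
  by (simp add: lowdeg_def coeff_eq_0)
lemma lowdeg_degree': "lowdeg a n \<Longrightarrow> degree a \<le> n"
  by (metis degree_le le_less_trans less_imp_le lowdeg_def not_less)
lemma lowdeg_imp_degree: "lowdeg a n \<Longrightarrow> 1 \<le> n \<Longrightarrow> degree a < n"
proof -
  assume a: "lowdeg a n" "1 \<le> n"
  have "degree a \<le> n - 1" using a by (intro degree_le) (auto simp: lowdeg_def)
  then show ?thesis using a by simp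
qed

lemma lowdeg_linmult:
  assumes "lowdeg a n"
  shows "lowdeg ([:c, 1:] * a) (Suc n)"
  using assms by (auto simp: lowdeg_def coeff_pCons' mult_pCons_left)

lemma coeff_linmult:
  "coeff ([:c, 1:] * a) (Suc i) = c * coeff a (Suc i) + coeff (a::real poly) i"
  by (simp add: mult_pCons_left)

lemma poly_pochhammer: "poly (pochhammer q i) x = pochhammer (poly q x) i"
  by (induction i) (simp_all add: pochhammer_Suc)

lemma lin_poch:
  "coeff (pochhammer [:a, b:] i) i = b ^ i \<and> lowdeg (pochhammer [:a, b:] i) (Suc i)"
proof (induction i)
  case 0 then show ?case by (auto simp: lowdeg_def coeff_pCons')
next
  case (Suc i)
  have e: "pochhammer [:a, b:] (Suc i) = smult (a + of_nat i) (pochhammer [:a, b:] i) + pCons 0 (smult b (pochhammer [:a, b:] i))"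
    by (simp add: pochhammer_Suc of_nat_poly)
  show ?case
  proof
    show "coeff (pochhammer [:a, b:] (Suc i)) (Suc i) = b ^ Suc i"
      unfolding e using Suc.IH by (simp add: lowdeg_def)
    show "lowdeg (pochhammer [:a, b:] (Suc i)) (Suc (Suc i))"
      unfolding e using Suc.IH by (auto simp: lowdeg_def coeff_pCons')
  qed
qed

lemma span_lemma:
  fixes B :: "nat \<Rightarrow> real poly"
  assumes B: "\<And>m. m < n \<Longrightarrow> lowdeg (B m) (Suc m) \<and> coeff (B m) m = 1"
  shows "lowdeg s n \<Longrightarrow> \<exists>a. s = (\<Sum>m<n. smult (a m) (B m))"
  using B
proof (induction n arbitrary: s)
  case 0 then show ?case using lowdeg_0 by auto
next
  case (Suc n)
  define s' where "s' = s - smult (coeff s n) (B n)"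
  have Bn: "lowdeg (B n) (Suc n)" "coeff (B n) n = 1" using Suc.prems(2)[of n] by auto
  have "lowdeg s' n"
    unfolding lowdeg_def
  proof (intro allI impI)
    fix i assume i: "n \<le> i"
    show "coeff s' i = 0"
    proof (cases "i = n")
      case True then show ?thesis by (simp add: s'_def Bn)
    next
      case False
      then have "Suc n \<le> i" using i by simp
      then show ?thesis using Suc.prems(1) Bn(1) by (simp add: s'_def lowdeg_def)
    qed
  qed
  then obtain a where a: "s' = (\<Sum>m<n. smult (a m) (B m))"
    using Suc.IH[of s'] Suc.prems(2) by auto
  define a' where "a' = a(n := coeff s n)"
  have "s = (\<Sum>m<n. smult (a m) (B m)) + smult (coeff s n) (B n)"
    using a by (simp add: s'_def algebra_simps)
  also have "(\<Sum>m<n. smult (a m) (B m)) = (\<Sum>m<n. smult (a' m) (B m))"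
    by (rule sum.cong) (auto simp: a'_def)
  finally have "s = (\<Sum>m<Suc n. smult (a' m) (B m))" by (simp add: a'_def)
  then show ?case by blast
qed

definition kp :: "nat \<Rightarrow> real \<Rightarrow> nat \<Rightarrow> real poly" where
  "kp N p n = smult (p ^ n * pochhammer (- real N) n)
     (\<Sum>k\<le>n. smult (pochhammer (- real n) k / (pochhammer (- real N) k * fact k) * (1 / p) ^ k)
              (pochhammer [:0, -1:] k))"

lemma poly_kp: "poly (kp N p n) = kraw N p n"
  by (rule ext) (simp add: kp_def kraw_def poly_sum poly_pochhammer sum_distrib_left field_simps)

lemma kp_lowdeg: "lowdeg (kp N p n) (Suc n)"
  unfolding kp_def
  by (intro lowdeg_smult lowdeg_sum) (auto intro: lowdeg_mono lin_poch[THEN conjunct2])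

lemma kp_lead:
  assumes "n \<le> N" "p \<noteq> 0"
  shows "coeff (kp N p n) n = 1"
proof -
  have pN: "pochhammer (- real N) n \<noteq> 0"
    using assms(1) by (auto simp: pochhammer_eq_0_iff)
  have c: "coeff (pochhammer [:0::real, -1:] k) n = (if k = n then (-1) ^ n else 0)" if "k \<le> n" for k
  proof (cases "k = n")
    case True then show ?thesis using lin_poch[of 0 "-1" n] by simp
  next
    case False
    then have "Suc k \<le> n" using that by simp
    then show ?thesis using lin_poch[of 0 "-1" k] False by (simp add: lowdeg_def)
  qed
  have "coeff (kp N p n) n = p ^ n * pochhammer (- real N) n *
      (\<Sum>k\<le>n. pochhammer (- real n) k / (pochhammer (- real N) k * fact k) * (1 / p) ^ k
              * (if k = n then (-1) ^ n else 0))"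
    unfolding kp_def coeff_smult coeff_sum by (simp add: c)
  also have "\<dots> = p ^ n * pochhammer (- real N) n *
      (pochhammer (- real n) n / (pochhammer (- real N) n * fact n) * (1 / p) ^ n * (-1) ^ n)"
    by (simp add: if_distrib sum.delta cong: if_cong)
  also have "\<dots> = 1"
    using pN assms(2) by (simp add: pochhammer_same field_simps power_mult_distrib[symmetric])
  finally show ?thesis .
qed

definition tb :: "nat \<Rightarrow> nat \<Rightarrow> real poly" where
  "tb N m = pochhammer [:- real N, 1:] m"

lemma tb_props: "lowdeg (tb N m) (Suc m) \<and> coeff (tb N m) m = 1"
  using lin_poch[of "- real N" 1 m] by (simp add: tb_def)

lemma poly_tb: "poly (tb N m) x = pochhammer (x - real N) m"
  by (simp add: tb_def poly_pochhammer)



definition ip :: "nat \<Rightarrow> real \<Rightarrow> (real \<Rightarrow> real) \<Rightarrow> (real \<Rightarrow> real) \<Rightarrow> real" where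
  "ip N p f g = (\<Sum>x\<le>N. f (real x) * g (real x) * binw N p x)"

lemma ip_comm: "ip N p f g = ip N p g f"
  unfolding ip_def by (simp add: mult.commute)

lemma ip_sum_left: "ip N p (\<lambda>x. \<Sum>k\<in>A. c k * f k x) g = (\<Sum>k\<in>A. c k * ip N p (f k) g)"
proof -
  have "ip N p (\<lambda>x. \<Sum>k\<in>A. c k * f k x) g = (\<Sum>x\<le>N. \<Sum>k\<in>A. c k * (f k (real x) * g (real x) * binw N p x))"
    unfolding ip_def by (simp add: sum_distrib_right mult.assoc)
  also have "\<dots> = (\<Sum>k\<in>A. \<Sum>x\<le>N. c k * (f k (real x) * g (real x) * binw N p x))"
    by (rule sum.swap)
  also have "\<dots> = (\<Sum>k\<in>A. c k * ip N p (f k) g)"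
    unfolding ip_def by (simp add: sum_distrib_left)
  finally show ?thesis .
qed

lemma ip_sum_right: "ip N p g (\<lambda>x. \<Sum>k\<in>A. c k * f k x) = (\<Sum>k\<in>A. c k * ip N p g (f k))"
  unfolding ip_comm[of N p g] by (rule ip_sum_left)

lemma ip_poly_sum_left:
  "ip N p (poly (\<Sum>k\<in>A. smult (c k) (q k))) g = (\<Sum>k\<in>A. c k * ip N p (poly (q k)) g)"
proof -
  have "poly (\<Sum>k\<in>A. smult (c k) (q k)) = (\<lambda>x. \<Sum>k\<in>A. c k * poly (q k) x)"
    by (rule ext) (simp add: poly_sum)
  then show ?thesis by (simp add: ip_sum_left)
qed

lemma ip_poly_sum_right:
  "ip N p g (poly (\<Sum>k\<in>A. smult (c k) (q k))) = (\<Sum>k\<in>A. c k * ip N p g (poly (q k)))"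
  unfolding ip_comm[of N p g] by (rule ip_poly_sum_left)

lemma ip_add_left: "ip N p (poly (a + b)) g = ip N p (poly a) g + ip N p (poly b) g"
  unfolding ip_def by (simp add: sum.distrib[symmetric] algebra_simps)
lemma ip_diff_left: "ip N p (poly (a - b)) g = ip N p (poly a) g - ip N p (poly b) g"
  unfolding ip_def by (simp add: sum_subtractf[symmetric] algebra_simps)
lemma ip_smult_left: "ip N p (poly (smult c a)) g = c * ip N p (poly a) g"
  unfolding ip_def by (simp add: sum_distrib_left algebra_simps)

lemma ip_linmult:
  "ip N p (poly ([:- y, 1:] * a)) (poly b) = ip N p (poly a) (poly ([:- y, 1:] * b))"
  unfolding ip_def by (simp add: algebra_simps)

lemma binw_pos: "0 < p \<Longrightarrow> p < 1 \<Longrightarrow> x \<le> N \<Longrightarrow> binw N p x > 0"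
  unfolding binw_def by simp

lemma ip_self_nonneg: "0 < p \<Longrightarrow> p < 1 \<Longrightarrow> ip N p f f \<ge> 0"
  unfolding ip_def by (intro sum_nonneg) (simp add: binw_pos less_imp_le)

lemma ip_self_zero:
  assumes "0 < p" "p < 1" "ip N p f f = 0" "x \<le> N"
  shows "f (real x) = 0"
proof -
  have nn: "\<And>i. i \<in> {..N} \<Longrightarrow> 0 \<le> f (real i) * f (real i) * binw N p i"
    using assms(1,2) by (simp add: binw_pos less_imp_le)
  have "f (real x) * f (real x) * binw N p x = 0"
    using sum_nonneg_eq_0_iff[of "{..N}" "\<lambda>i. f (real i) * f (real i) * binw N p i"] nn assms(3,4)
    unfolding ip_def by auto
  then show ?thesis using binw_pos[OF assms(1,2,4)] by simp
qed

lemma zero_poly: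
  assumes "lowdeg q (Suc N)" "\<And>x. x \<le> N \<Longrightarrow> poly q (real x) = 0"
  shows "q = 0"
proof (rule ccontr)
  assume q: "q \<noteq> 0"
  have "real ` {..N} \<subseteq> {x. poly q x = 0}" using assms(2) by auto
  then have "card (real ` {..N}) \<le> card {x. poly q x = 0}"
    by (intro card_mono poly_roots_finite q)
  also have "\<dots> \<le> degree q" by (rule card_poly_roots_bound[OF q])
  also have "\<dots> \<le> N" using lowdeg_imp_degree[OF assms(1)] by simp
  finally have "card (real ` {..N}) \<le> N" .
  moreover have "card (real ` {..N}) = Suc N"
    by (subst card_image) (auto simp: inj_on_def)
  ultimately show False by simp
qed

lemma pascal_sum:
  fixes g :: "nat \<Rightarrow> real"
  shows "(\<Sum>k\<le>Suc n. (-1) ^ k * real (Suc n choose k) * g k)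
       = - (\<Sum>k\<le>n. (-1) ^ k * real (n choose k) * (g (Suc k) - g k))"
proof -
  have A: "(\<Sum>k\<le>Suc n. (-1) ^ k * real (Suc n choose k) * g k)
     = g 0 - (\<Sum>k\<le>n. (-1) ^ k * real (n choose k) * g (Suc k))
           - (\<Sum>k\<le>n. (-1) ^ k * real (n choose Suc k) * g (Suc k))"
  proof -
    have h: "(-1) ^ Suc k * real (Suc n choose Suc k) * g (Suc k)
       = - ((-1) ^ k * real (n choose k) * g (Suc k)) - (-1) ^ k * real (n choose Suc k) * g (Suc k)" for k
      by (simp add: algebra_simps)
    have "(\<Sum>k\<le>Suc n. (-1) ^ k * real (Suc n choose k) * g k)
       = g 0 + (\<Sum>k\<le>n. (-1) ^ Suc k * real (Suc n choose Suc k) * g (Suc k))"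
      by (subst sum.atMost_Suc_shift) simp
    also have "\<dots> = g 0 + (\<Sum>k\<le>n. - ((-1) ^ k * real (n choose k) * g (Suc k)) - (-1) ^ k * real (n choose Suc k) * g (Suc k))"
      by (simp only: h)
    finally show ?thesis by (simp only: sum_subtractf sum_negf)
  qed
  have B: "(\<Sum>k\<le>n. (-1) ^ k * real (n choose k) * g k)
     = g 0 - (\<Sum>k\<le>n. (-1) ^ k * real (n choose Suc k) * g (Suc k))"
  proof -
    have "(\<Sum>k\<le>n. (-1) ^ k * real (n choose k) * g k) = (\<Sum>k<Suc n. (-1) ^ k * real (n choose k) * g k)"
      by (simp add: lessThan_Suc_atMost)
    also have "\<dots> = g 0 + (\<Sum>k<n. (-1) ^ Suc k * real (n choose Suc k) * g (Suc k))"
      by (subst sum.lessThan_Suc_shift) simp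
    also have "(\<Sum>k<n. (-1) ^ Suc k * real (n choose Suc k) * g (Suc k))
       = (\<Sum>k\<le>n. (-1) ^ Suc k * real (n choose Suc k) * g (Suc k))"
      by (simp add: lessThan_Suc_atMost[symmetric])
    finally show ?thesis by (simp add: sum_negf[symmetric])
  qed
  have C: "(\<Sum>k\<le>n. (-1) ^ k * real (n choose k) * (g (Suc k) - g k))
     = (\<Sum>k\<le>n. (-1) ^ k * real (n choose k) * g (Suc k)) - (\<Sum>k\<le>n. (-1) ^ k * real (n choose k) * g k)"
    by (simp add: sum_subtractf[symmetric] right_diff_distrib)
  show ?thesis unfolding A C B by simp
qed

lemma finite_diff_vanish:
  "m < n \<Longrightarrow> (\<Sum>k\<le>n. (-1) ^ k * real (n choose k) * pochhammer (a + real k) m) = 0"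
proof (induction n arbitrary: a m)
  case 0 then show ?case by simp
next
  case (Suc n)
  have d: "pochhammer (a + real (Suc k)) m - pochhammer (a + real k) m
      = real m * pochhammer (a + 1 + real k) (m - 1)" for k
  proof (cases m)
    case 0 then show ?thesis by simp
  next
    case (Suc m')
    have 1: "pochhammer (a + real k) (Suc m') = (a + real k) * pochhammer (a + 1 + real k) m'"
      by (simp add: pochhammer_rec algebra_simps)
    have 2: "pochhammer (a + real (Suc k)) (Suc m') = pochhammer (a + 1 + real k) m' * (a + 1 + real k + real m')"
      by (simp add: pochhammer_Suc algebra_simps)
    show ?thesis unfolding Suc 1 2 by (simp add: algebra_simps)
  qed
  show ?case
  proof (cases m)
    case 0
    then show ?thesis unfolding pascal_sum by simp
  next
    case (Suc m')
    have "m' < n" using Suc.prems Suc by simp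
    then have "(\<Sum>k\<le>n. (-1) ^ k * real (n choose k) * pochhammer ((a + 1) + real k) m') = 0"
      by (rule Suc.IH)
    then have "real m * (\<Sum>k\<le>n. (-1) ^ k * real (n choose k) * pochhammer (a + 1 + real k) (m - 1)) = 0"
      using Suc by simp
    then have "(\<Sum>k\<le>n. (-1) ^ k * real (n choose k) * (real m * pochhammer (a + 1 + real k) (m - 1))) = 0"
      by (simp only: sum_distrib_left mult.left_commute)
    then show ?thesis unfolding pascal_sum d by simp
  qed
qed



lemma choose_identity:
  assumes "k \<le> x" "x + m \<le> N"
  shows "(N choose x) * (x choose k) * ((N - x) choose m)
       = (N choose (k + m)) * ((k + m) choose k) * ((N - k - m) choose (x - k))"
proof -
  define A where "A = N - k"
  define B where "B = x - k"
  have AB: "A - B = N - x" "B \<le> A" "m \<le> A - B" using assms by (auto simp: A_def B_def)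
  have 1: "(N choose x) * (x choose k) = (N choose k) * (A choose B)"
    unfolding A_def B_def using assms by (intro choose_mult) auto
  have 2: "(A choose B) * ((A - B) choose m) = (A choose m) * ((A - m) choose B)"
  proof -
    have "(A choose B) = (A choose (A - B))" using AB by (intro binomial_symmetric) auto
    moreover have "(A choose (A - B)) * ((A - B) choose m) = (A choose m) * ((A - m) choose (A - B - m))"
      using AB by (intro choose_mult) auto
    moreover have "(A - m) choose (A - B - m) = (A - m) choose B"
    proof -
      have "B \<le> A - m" using AB by auto
      then have "(A - m) choose B = (A - m) choose (A - m - B)" by (rule binomial_symmetric)
      moreover have "A - m - B = A - B - m" by simp
      ultimately show ?thesis by simp
    qed
    ultimately show ?thesis by simp
  qed
  have 3: "(N choose k) * (A choose m) = (N choose (k + m)) * ((k + m) choose k)"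
    using choose_mult[of k "k + m" N] assms by (simp add: A_def)
  have "(N choose x) * (x choose k) * ((N - x) choose m) = (N choose k) * ((A choose B) * ((A - B) choose m))"
    unfolding 1 AB(1) by simp
  also have "\<dots> = ((N choose k) * (A choose m)) * ((A - m) choose B)" unfolding 2 by simp
  also have "\<dots> = (N choose (k + m)) * ((k + m) choose k) * ((N - k - m) choose (x - k))"
    unfolding 3 by (simp add: A_def B_def)
  finally show ?thesis .
qed

lemma poch_neg_nat: "pochhammer (- real a) k = (-1) ^ k * fact k * real (a choose k)"
proof -
  have "real (a choose k) = (-1) ^ k * pochhammer (- real a) k / fact k"
    by (simp add: binomial_gbinomial gbinomial_pochhammer)
  then have "(-1) ^ k * fact k * real (a choose k) = ((-1) ^ k * (-1) ^ k) * pochhammer (- real a) k"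
    by simp
  also have "(-1) ^ k * (-1) ^ k = (1::real)" by (simp flip: power_add)
  finally show ?thesis by simp
qed

lemma pointwise_M:
  assumes "x \<le> N"
  shows "real (N choose x) * pochhammer (- real x) k * pochhammer (real x - real N) m
     = pochhammer (- real N) (k + m) * (if k \<le> x \<and> x + m \<le> N then real ((N - k - m) choose (x - k)) else 0)"
proof -
  have e: "real x - real N = - real (N - x)" using assms by simp
  show ?thesis
  proof (cases "k \<le> x \<and> x + m \<le> N")
    case True
    have nat: "(N choose x) * (x choose k) * ((N - x) choose m)
       = (N choose (k + m)) * ((k + m) choose k) * ((N - k - m) choose (x - k))"
      using True by (intro choose_identity) auto
    have f: "fact k * fact m * real ((k + m) choose k) = (fact (k + m) :: real)"
    proof -
      have "fact k * fact (k + m - k) * ((k + m) choose k) = (fact (k + m) :: nat)"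
        by (rule binomial_fact_lemma) simp
      then have "real (fact k * fact m * ((k + m) choose k)) = real (fact (k + m))" by simp
      then show ?thesis by (simp only: of_nat_mult of_nat_fact)
    qed
    have "real (N choose x) * pochhammer (- real x) k * pochhammer (real x - real N) m
        = (-1) ^ (k + m) * (fact k * fact m) * real ((N choose x) * (x choose k) * ((N - x) choose m))"
      unfolding e poch_neg_nat by (simp add: power_add algebra_simps)
    also have "\<dots> = (-1) ^ (k + m) * (fact k * fact m * real ((k + m) choose k)) * real (N choose (k + m)) * real ((N - k - m) choose (x - k))"
      unfolding nat of_nat_mult by (simp add: algebra_simps)
    also have "\<dots> = pochhammer (- real N) (k + m) * real ((N - k - m) choose (x - k))"
      unfolding f poch_neg_nat by (simp add: algebra_simps)
    finally show ?thesis using True by simp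
  next
    case False
    then have "x < k \<or> N - x < m" using assms by auto
    then have "(x choose k) = 0 \<or> ((N - x) choose m) = 0" by auto
    then show ?thesis using False unfolding e poch_neg_nat by auto
  qed
qed

lemma sum_window:
  fixes f :: "nat \<Rightarrow> real"
  assumes "k + L \<le> N"
  shows "(\<Sum>x\<le>N. if k \<le> x \<and> x \<le> k + L then f (x - k) else 0) = (\<Sum>y\<le>L. f y)"
proof -
  have "(\<Sum>x\<le>N. if k \<le> x \<and> x \<le> k + L then f (x - k) else 0) = (\<Sum>x\<le>N. if x \<in> {k..k+L} then f (x - k) else 0)"
    by simp
  also have "\<dots> = (\<Sum>x\<in>{..N} \<inter> {k..k+L}. f (x - k))"
    by (rule sum.inter_restrict[symmetric]) simp
  also have "{..N} \<inter> {k..k+L} = {0 + k..L + k}" using assms by auto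
  also have "(\<Sum>x\<in>{0 + k..L + k}. f (x - k)) = (\<Sum>y\<in>{0..L}. f y)"
    by (subst sum.shift_bounds_cl_nat_ivl) simp
  also have "{0..L} = {..L}" by auto
  finally show ?thesis .
qed

lemma M_sum:
  "(\<Sum>x\<le>N. pochhammer (- real x) k * pochhammer (real x - real N) m * binw N p x)
     = pochhammer (- real N) (k + m) * p ^ k * (1 - p) ^ m"
proof (cases "k + m \<le> N")
  case False
  then have z: "pochhammer (- real N) (k + m) = 0"
    by (intro pochhammer_of_nat_eq_0_lemma) simp
  have "\<And>x. x \<in> {..N} \<Longrightarrow> pochhammer (- real x) k * pochhammer (real x - real N) m * binw N p x = 0"
  proof -
    fix x assume "x \<in> {..N}"
    then have xN: "x \<le> N" by simp
    then have "real (N choose x) * (pochhammer (- real x) k * pochhammer (real x - real N) m) = 0"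
      using pointwise_M[of x N k m] z by (simp add: mult.assoc)
    moreover have "real (N choose x) \<noteq> 0" using xN by simp
    ultimately have "pochhammer (- real x) k * pochhammer (real x - real N) m = 0" by simp
    then show "pochhammer (- real x) k * pochhammer (real x - real N) m * binw N p x = 0"
      by simp
  qed
  then have "(\<Sum>x\<le>N. pochhammer (- real x) k * pochhammer (real x - real N) m * binw N p x) = 0"
    by (intro sum.neutral) blast
  then show ?thesis using z by simp
next
  case True
  define L where "L = N - k - m"
  have "(\<Sum>x\<le>N. pochhammer (- real x) k * pochhammer (real x - real N) m * binw N p x)
      = (\<Sum>x\<le>N. pochhammer (- real N) (k + m) *
          (if k \<le> x \<and> x \<le> k + L then real (L choose (x - k)) * (p ^ (x - k + k) * (1 - p) ^ (N - (x - k + k))) else 0))"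
  proof (rule sum.cong[OF refl])
    fix x assume x: "x \<in> {..N}"
    have c: "(k \<le> x \<and> x + m \<le> N) = (k \<le> x \<and> x \<le> k + L)" using True by (auto simp: L_def)
    have "pochhammer (- real x) k * pochhammer (real x - real N) m * binw N p x
       = (real (N choose x) * pochhammer (- real x) k * pochhammer (real x - real N) m) * (p ^ x * (1 - p) ^ (N - x))"
      unfolding binw_def by (simp add: algebra_simps)
    also have "\<dots> = pochhammer (- real N) (k + m) * (if k \<le> x \<and> x \<le> k + L then real (L choose (x - k)) else 0) * (p ^ x * (1 - p) ^ (N - x))"
      using pointwise_M[of x N k m] x c by (simp add: L_def)
    finally show "pochhammer (- real x) k * pochhammer (real x - real N) m * binw N p x
       = pochhammer (- real N) (k + m) *
          (if k \<le> x \<and> x \<le> k + L then real (L choose (x - k)) * (p ^ (x - k + k) * (1 - p) ^ (N - (x - k + k))) else 0)"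
      by auto
  qed
  also have "\<dots> = pochhammer (- real N) (k + m) * (\<Sum>x\<le>N.
          (if k \<le> x \<and> x \<le> k + L then real (L choose (x - k)) * (p ^ (x - k + k) * (1 - p) ^ (N - (x - k + k))) else 0))"
    by (simp add: sum_distrib_left)
  also have "(\<Sum>x\<le>N.
          (if k \<le> x \<and> x \<le> k + L then real (L choose (x - k)) * (p ^ (x - k + k) * (1 - p) ^ (N - (x - k + k))) else 0))
       = (\<Sum>y\<le>L. real (L choose y) * (p ^ (y + k) * (1 - p) ^ (N - (y + k))))"
    using sum_window[of k L N "\<lambda>y. real (L choose y) * (p ^ (y + k) * (1 - p) ^ (N - (y + k)))"] True
    by (simp add: L_def)
  also have "\<dots> = (\<Sum>y\<le>L. p ^ k * (1 - p) ^ m * (real (L choose y) * p ^ y * (1 - p) ^ (L - y)))"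
  proof (rule sum.cong[OF refl])
    fix y assume "y \<in> {..L}"
    then have "N - (y + k) = (L - y) + m" using True by (auto simp: L_def)
    then show "real (L choose y) * (p ^ (y + k) * (1 - p) ^ (N - (y + k))) = p ^ k * (1 - p) ^ m * (real (L choose y) * p ^ y * (1 - p) ^ (L - y))"
      by (simp add: power_add algebra_simps)
  qed
  also have "\<dots> = p ^ k * (1 - p) ^ m * (p + (1 - p)) ^ L"
    by (subst binomial_ring) (simp add: sum_distrib_left)
  also have "(p + (1 - p)) ^ L = (1::real)" by simp
  finally show ?thesis by (simp only: mult_1_right mult.assoc)
qed



lemma kraw_as_sum:
  "kraw N p n = (\<lambda>x. \<Sum>k\<le>n. (p ^ n * pochhammer (- real N) n *
      (pochhammer (- real n) k / (pochhammer (- real N) k * fact k) * (1 / p) ^ k)) * pochhammer (- x) k)"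
  by (rule ext) (simp add: kraw_def sum_distrib_left divide_inverse algebra_simps)

lemma orth_tb:
  assumes "m < n" "n \<le> N" "p \<noteq> 0"
  shows "ip N p (kraw N p n) (poly (tb N m)) = 0"
proof -
  define c where "c = p ^ n * pochhammer (- real N) n"
  define e where "e k = pochhammer (- real n) k / (pochhammer (- real N) k * fact k) * (1 / p) ^ k" for k
  have "ip N p (kraw N p n) (poly (tb N m))
      = (\<Sum>k\<le>n. (c * e k) * ip N p (\<lambda>x. pochhammer (- x) k) (poly (tb N m)))"
    unfolding kraw_as_sum c_def[symmetric] e_def[symmetric] by (rule ip_sum_left)
  also have "\<dots> = (\<Sum>k\<le>n. c * (1 - p) ^ m * ((-1) ^ k * real (n choose k) * pochhammer (- real N + real k) m))"
  proof (rule sum.cong[OF refl])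
    fix k assume "k \<in> {..n}"
    then have kn: "k \<le> n" by simp
    have pN: "pochhammer (- real N) k \<noteq> 0"
      using kn assms(2) by (auto simp: pochhammer_eq_0_iff)
    have "ip N p (\<lambda>x. pochhammer (- x) k) (poly (tb N m)) = pochhammer (- real N) (k + m) * p ^ k * (1 - p) ^ m"
      unfolding ip_def poly_tb by (rule M_sum)
    also have "\<dots> = pochhammer (- real N) k * pochhammer (- real N + real k) m * p ^ k * (1 - p) ^ m"
      by (simp add: pochhammer_product')
    finally have I: "ip N p (\<lambda>x. pochhammer (- x) k) (poly (tb N m)) = pochhammer (- real N) k * pochhammer (- real N + real k) m * p ^ k * (1 - p) ^ m" .
    have E: "e k * (pochhammer (- real N) k * p ^ k) = (-1) ^ k * real (n choose k)"
      unfolding e_def poch_neg_nat using pN assms(2,3) kn by (simp add: field_simps power_one_over)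
    show "c * e k * ip N p (\<lambda>x. pochhammer (- x) k) (poly (tb N m))
        = c * (1 - p) ^ m * ((-1) ^ k * real (n choose k) * pochhammer (- real N + real k) m)"
      unfolding I E[symmetric] by (simp add: algebra_simps)
  qed
  also have "\<dots> = c * (1 - p) ^ m * (\<Sum>k\<le>n. (-1) ^ k * real (n choose k) * pochhammer (- real N + real k) m)"
    by (simp add: sum_distrib_left)
  also have "\<dots> = 0" by (simp only: finite_diff_vanish[OF assms(1)] mult_zero_right)
  finally show ?thesis .
qed

lemma orth_low:
  assumes "lowdeg s n" "n \<le> N" "p \<noteq> 0"
  shows "ip N p (kraw N p n) (poly s) = 0"
proof -
  obtain a where a: "s = (\<Sum>m<n. smult (a m) (tb N m))"
    using span_lemma[of n "tb N" s] tb_props assms(1) by blast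
  have "ip N p (kraw N p n) (poly s) = (\<Sum>m<n. a m * ip N p (kraw N p n) (poly (tb N m)))"
    unfolding a by (rule ip_poly_sum_right)
  also have "\<dots> = 0" using orth_tb assms(2,3) by simp
  finally show ?thesis .
qed

lemma krawnorm_ip: "krawnorm N p k = ip N p (kraw N p k) (kraw N p k)"
  unfolding krawnorm_def ip_def by (simp add: power2_eq_square)

lemma norm_pos:
  assumes "0 < p" "p < 1" "k \<le> N"
  shows "krawnorm N p k > 0"
proof -
  have ge: "krawnorm N p k \<ge> 0" unfolding krawnorm_ip by (rule ip_self_nonneg[OF assms(1,2)])
  have "krawnorm N p k \<noteq> 0"
  proof
    assume z: "krawnorm N p k = 0"
    have "poly (kp N p k) (real x) = 0" if "x \<le> N" for x
      using ip_self_zero[OF assms(1,2) z[unfolded krawnorm_ip] that] by (simp add: poly_kp)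
    moreover have "lowdeg (kp N p k) (Suc N)"
      by (rule lowdeg_mono[OF kp_lowdeg]) (use assms(3) in simp)
    ultimately have "kp N p k = 0" using zero_poly by blast
    moreover have "coeff (kp N p k) k = 1" using kp_lead assms by simp
    ultimately show False by simp
  qed
  then show ?thesis using ge by simp
qed

lemma orth_kk:
  assumes "k \<noteq> l" "k \<le> N" "l \<le> N" "p \<noteq> 0"
  shows "ip N p (kraw N p l) (kraw N p k) = 0"
proof (cases "k < l")
  case True
  have "lowdeg (kp N p k) l" by (rule lowdeg_mono[OF kp_lowdeg]) (use True in simp)
  then show ?thesis using orth_low[of "kp N p k" l N p] assms by (simp add: poly_kp)
next
  case False
  then have "l < k" using assms(1) by simp
  then have "lowdeg (kp N p l) k" by (intro lowdeg_mono[OF kp_lowdeg]) simp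
  then show ?thesis using orth_low[of "kp N p l" k N p] assms by (simp add: poly_kp ip_comm)
qed

lemma expansion:
  assumes "lowdeg s n" "n \<le> N" "0 < p" "p < 1"
  shows "s = (\<Sum>k<n. smult (ip N p (poly s) (kraw N p k) / krawnorm N p k) (kp N p k))"
proof -
  have p0: "p \<noteq> 0" using assms by simp
  obtain a where a: "s = (\<Sum>m<n. smult (a m) (kp N p m))"
    using span_lemma[of n "kp N p" s] kp_lowdeg kp_lead[OF _ p0] assms(1,2) by fastforce
  have "a j = ip N p (poly s) (kraw N p j) / krawnorm N p j" if j: "j < n" for j
  proof -
    have "ip N p (poly s) (kraw N p j) = (\<Sum>m<n. a m * ip N p (poly (kp N p m)) (kraw N p j))"
      unfolding a by (rule ip_poly_sum_left)
    also have "\<dots> = (\<Sum>m<n. if m = j then a j * krawnorm N p j else 0)"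
    proof (rule sum.cong[OF refl])
      fix m assume "m \<in> {..<n}"
      then have "m \<le> N" using assms(2) by simp
      then show "a m * ip N p (poly (kp N p m)) (kraw N p j) = (if m = j then a j * krawnorm N p j else 0)"
        using orth_kk[of j m N p] j assms(2) p0 by (auto simp: poly_kp krawnorm_ip)
    qed
    also have "\<dots> = a j * krawnorm N p j" using j by simp
    moreover have "krawnorm N p j \<noteq> 0" using norm_pos[OF assms(3,4), of j N] j assms(2) by simp
    ultimately show ?thesis by simp
  qed
  then show ?thesis unfolding a[symmetric] by (subst a) (rule sum.cong, auto)
qed

lemma expansion_eval:
  assumes "lowdeg s n" "n \<le> N" "0 < p" "p < 1"
  shows "poly s y = (\<Sum>k<n. ip N p (poly s) (kraw N p k) / krawnorm N p k * kraw N p k y)"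
  by (subst expansion[OF assms]) (simp add: poly_sum poly_kp)

lemma reprod:
  assumes "lowdeg r n" "n \<le> N" "0 < p" "p < 1"
  shows "ip N p (\<lambda>x. kernel N p n 0 j x y) (poly r) = fdiff j (poly r) y"
proof -
  have k: "(\<lambda>x. kernel N p n 0 j x y) = (\<lambda>x. \<Sum>k<n. (fdiff j (kraw N p k) y / krawnorm N p k) * kraw N p k x)"
    by (rule ext) (simp add: kernel_def mult.commute)
  define cc where "cc k = ip N p (poly r) (kraw N p k) / krawnorm N p k" for k
  have pr: "poly r = (\<lambda>x. \<Sum>k<n. cc k * kraw N p k x)"
    by (rule ext) (unfold cc_def, rule expansion_eval[OF assms])
  have fd: "fdiff j (poly r) y = (\<Sum>k<n. cc k * fdiff j (kraw N p k) y)"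
    by (subst pr) (simp only: fdiff_sum fdiff_cmult)
  have "ip N p (\<lambda>x. kernel N p n 0 j x y) (poly r) = (\<Sum>k<n. (fdiff j (kraw N p k) y / krawnorm N p k) * ip N p (kraw N p k) (poly r))"
    unfolding k by (rule ip_sum_left)
  also have "\<dots> = (\<Sum>k<n. cc k * fdiff j (kraw N p k) y)"
    by (simp add: cc_def ip_comm mult.commute)
  also have "\<dots> = fdiff j (poly r) y" by (rule fd[symmetric])
  finally show ?thesis .
qed



lemma kp_coeff_high:
  assumes "k < i" shows "coeff (kp N p k) i = 0"
  using kp_lowdeg[of N p k] assms by (simp add: lowdeg_def)

lemma CD:
  assumes n1: "1 \<le> n" and nN: "n \<le> N" and p0: "0 < p" and p1: "p < 1"
  shows "(x - y) * kernel N p n 0 0 x y =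
    (kraw N p n x * kraw N p (n - 1) y - kraw N p (n - 1) x * kraw N p n y) / krawnorm N p (n - 1)"
proof -
  have pn0: "p \<noteq> 0" using p0 by simp
  define KP where "KP = (\<Sum>k<n. smult (kraw N p k y / krawnorm N p k) (kp N p k))"
  define c1 where "c1 = kraw N p (n - 1) y / krawnorm N p (n - 1)"
  define c2 where "c2 = kraw N p n y / krawnorm N p (n - 1)"
  define F where "F = [:- y, 1:] * KP - smult c1 (kp N p n) + smult c2 (kp N p (n - 1))"
  have nrm: "krawnorm N p (n - 1) > 0" using norm_pos[OF p0 p1, of "n - 1" N] nN by simp
  have polyKP: "poly KP x = kernel N p n 0 0 x y" for x
    unfolding KP_def kernel_def by (simp add: poly_sum poly_kp mult.commute)
  have coeffKP: "coeff KP i = (if i = n - 1 then c1 else 0)" if "i \<ge> n - 1" for i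
  proof -
    have "coeff KP i = (\<Sum>k<n. kraw N p k y / krawnorm N p k * coeff (kp N p k) i)"
      unfolding KP_def by (simp add: coeff_sum)
    also have "\<dots> = (\<Sum>k<n. if k = n - 1 then (if i = n - 1 then c1 else 0) else 0)"
    proof (rule sum.cong[OF refl])
      fix k assume k: "k \<in> {..<n}"
      show "kraw N p k y / krawnorm N p k * coeff (kp N p k) i = (if k = n - 1 then (if i = n - 1 then c1 else 0) else 0)"
      proof (cases "k = n - 1")
        case True
        then show ?thesis using kp_lead[of "n - 1" N p] nN pn0 kp_coeff_high[of "n - 1" i N p] that
          by (auto simp: c1_def)
      next
        case False
        then have "k < i" using k that by auto
        then show ?thesis using False kp_coeff_high by simp
      qed
    qed
    also have "\<dots> = (if i = n - 1 then c1 else 0)" using n1 by (simp add: sum.delta)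
    finally show ?thesis .
  qed
  have lowF: "lowdeg F n"
    unfolding lowdeg_def
  proof (intro allI impI)
    fix i assume i: "n \<le> i"
    then obtain i' where i': "i = Suc i'" using n1 by (cases i) auto
    have "coeff ([:- y, 1:] * KP) i = - y * coeff KP (Suc i') + coeff KP i'"
      unfolding i' by (rule coeff_linmult)
    also have "\<dots> = (if i' = n - 1 then c1 else 0)" using coeffKP i i' by auto
    finally have a: "coeff ([:- y, 1:] * KP) i = (if i = n then c1 else 0)" using i' n1 by auto
    have b: "coeff (kp N p n) i = (if i = n then 1 else 0)"
      using kp_lead[OF nN pn0] kp_coeff_high[of n i N p] i by auto
    have c: "coeff (kp N p (n - 1)) i = 0" using kp_coeff_high i n1 by simp
    show "coeff F i = 0" unfolding F_def coeff_add coeff_diff coeff_smult a b c by simp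
  qed
  have orthF: "ip N p (poly F) (kraw N p m) = 0" if m: "m < n" for m
  proof -
    define s where "s = [:- y, 1:] * kp N p m - (if m = n - 1 then kp N p n else 0)"
    have lows: "lowdeg s n"
    proof (cases "m = n - 1")
      case False
      then have "Suc (Suc m) \<le> n" using m by simp
      then have "lowdeg ([:- y, 1:] * kp N p m) n"
        by (intro lowdeg_mono[OF lowdeg_linmult[OF kp_lowdeg]])
      then show ?thesis using False by (simp add: s_def)
    next
      case True
      show ?thesis unfolding lowdeg_def
      proof (intro allI impI)
        fix i assume i: "n \<le> i"
        then obtain i' where i': "i = Suc i'" using n1 by (cases i) auto
        have "coeff ([:- y, 1:] * kp N p m) i = - y * coeff (kp N p m) (Suc i') + coeff (kp N p m) i'"
          unfolding i' by (rule coeff_linmult)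
        also have "\<dots> = (if i = n then 1 else 0)"
          using True kp_coeff_high[of m "Suc i'" N p] kp_coeff_high[of m i' N p] kp_lead[of m N p] nN pn0 i i' n1
          by auto
        finally show "coeff s i = 0"
          using True kp_lead[OF nN pn0] kp_coeff_high[of n i N p] i by (auto simp: s_def)
      qed
    qed
    have ips: "ip N p (poly s) (kraw N p k) = ip N p (kraw N p k) (poly ([:- y, 1:] * kp N p m))" if k: "k < n" for k
    proof -
      have "ip N p (kraw N p n) (kraw N p k) = 0" using orth_kk[of k n N p] k nN pn0 by simp
      moreover have "ip N p (poly s) (kraw N p k) = ip N p (poly ([:- y, 1:] * kp N p m)) (kraw N p k) - (if m = n - 1 then ip N p (kraw N p n) (kraw N p k) else 0)"
        unfolding s_def by (cases "m = n - 1") (simp_all add: ip_diff_left poly_kp del: mult_pCons_left)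
      ultimately show ?thesis by (simp add: ip_comm del: mult_pCons_left)
    qed
    have "poly s y = (\<Sum>k<n. ip N p (poly s) (kraw N p k) / krawnorm N p k * kraw N p k y)"
      by (rule expansion_eval[OF lows nN p0 p1])
    also have "\<dots> = (\<Sum>k<n. kraw N p k y / krawnorm N p k * ip N p (kraw N p k) (poly ([:- y, 1:] * kp N p m)))"
      by (rule sum.cong[OF refl]) (simp add: ips)
    also have "\<dots> = ip N p (poly KP) (poly ([:- y, 1:] * kp N p m))"
      unfolding KP_def by (simp add: ip_poly_sum_left poly_kp)
    also have "\<dots> = ip N p (poly ([:- y, 1:] * KP)) (kraw N p m)"
      unfolding poly_kp[symmetric] ip_linmult ..
    finally have A: "ip N p (poly ([:- y, 1:] * KP)) (kraw N p m) = - (if m = n - 1 then kraw N p n y else 0)"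
      by (cases "m = n - 1") (simp_all add: s_def poly_kp)
    have B: "ip N p (kraw N p n) (kraw N p m) = 0" using orth_kk[of m n N p] m nN pn0 by simp
    have "ip N p (poly F) (kraw N p m) = - (if m = n - 1 then kraw N p n y else 0) + c2 * ip N p (kraw N p (n - 1)) (kraw N p m)"
      unfolding F_def by (simp add: ip_add_left ip_diff_left ip_smult_left A B poly_kp del: mult_pCons_left)
    also have "\<dots> = 0"
    proof (cases "m = n - 1")
      case True then show ?thesis using nrm by (simp add: c2_def krawnorm_ip[symmetric])
    next
      case False then show ?thesis using orth_kk[of m "n - 1" N p] m nN pn0 by simp
    qed
    finally show ?thesis .
  qed
  have F0: "F = 0"
  proof -
    obtain a where a: "F = (\<Sum>m<n. smult (a m) (kp N p m))"
      using span_lemma[of n "kp N p" F] kp_lowdeg kp_lead[OF _ pn0] lowF nN by fastforce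
    have "ip N p (poly F) (poly F) = (\<Sum>m<n. a m * ip N p (poly F) (poly (kp N p m)))"
      by (subst (2) a) (rule ip_poly_sum_right)
    also have "\<dots> = 0" using orthF by (simp add: poly_kp)
    finally have z: "ip N p (poly F) (poly F) = 0" .
    show ?thesis
    proof (rule zero_poly)
      show "lowdeg F (Suc N)" by (rule lowdeg_mono[OF lowF]) (use nN in simp)
      show "poly F (real x) = 0" if "x \<le> N" for x using ip_self_zero[OF p0 p1 z that] .
    qed
  qed
  have "poly F x = 0" using F0 by simp
  then have "(x - y) * kernel N p n 0 0 x y - c1 * kraw N p n x + c2 * kraw N p (n - 1) x = 0"
    unfolding F_def by (simp add: polyKP poly_kp left_diff_distrib)
  then have "(x - y) * kernel N p n 0 0 x y = c1 * kraw N p n x - c2 * kraw N p (n - 1) x" by simp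
  then show ?thesis unfolding c1_def c2_def by (simp add: diff_divide_distrib mult.commute)
qed



lemma falling_nz:
  assumes "falling z (j + 1) \<noteq> 0" "i \<le> j"
  shows "z - real i \<noteq> 0"
  using assms unfolding falling_def by (auto simp: prod_zero_iff)

lemma kernel0j:
  assumes n1: "1 \<le> n" and nN: "n \<le> N" and p0: "0 < p" and p1: "p < 1"
    and fx: "falling (x - y) (j + 1) \<noteq> 0"
  shows "kernel N p n 0 j x y = calA N p j n x y * kraw N p n x + calB N p j n x y * kraw N p (n - 1) x"
proof -
  define nr where "nr = krawnorm N p (n - 1)"
  define cA where "cA = kraw N p n x / nr"
  define cB where "cB = kraw N p (n - 1) x / nr"
  define G where "G t = cA * kraw N p (n - 1) t - cB * kraw N p n t" for t
  have nrp: "nr > 0" unfolding nr_def using norm_pos[OF p0 p1, of "n - 1" N] nN by simp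
  have fz: "falling (x - y) (j + 1) \<noteq> 0" by (rule fx)
  have "kernel N p n 0 j x y = (\<Sum>k<n. (kraw N p k x / krawnorm N p k) * fdiff j (kraw N p k) y)"
    unfolding kernel_def by (simp add: mult.commute)
  also have "\<dots> = fdiff j (\<lambda>t. \<Sum>k<n. (kraw N p k x / krawnorm N p k) * kraw N p k t) y"
    by (simp only: fdiff_sum fdiff_cmult)
  also have "\<dots> = fdiff j (\<lambda>t. G t / (x - t)) y"
  proof (rule fdiff_local)
    fix i assume i: "i \<le> j"
    have ne: "x - (y + real i) \<noteq> 0" using falling_nz[OF fz i] by simp
    have "(x - (y + real i)) * kernel N p n 0 0 x (y + real i) = G (y + real i)"
      unfolding CD[OF n1 nN p0 p1] G_def cA_def cB_def nr_def by (simp add: diff_divide_distrib mult.commute)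
    then have "kernel N p n 0 0 x (y + real i) = G (y + real i) / (x - (y + real i))"
      using ne by (simp add: field_simps)
    then show "(\<Sum>k<n. kraw N p k x / krawnorm N p k * kraw N p k (y + real i)) = G (y + real i) / (x - (y + real i))"
      unfolding kernel_def by (simp add: mult.commute)
  qed
  also have "\<dots> = fact j / falling (x - y) (j + 1) * (\<Sum>k\<le>j. fdiff k G y / fact k * falling (x - y) k)"
    by (rule L_main[OF fz])
  also have "(\<Sum>k\<le>j. fdiff k G y / fact k * falling (x - y) k)
      = cA * (\<Sum>k\<le>j. fdiff k (kraw N p (n - 1)) y / fact k * falling (x - y) k)
        - cB * (\<Sum>k\<le>j. fdiff k (kraw N p n) y / fact k * falling (x - y) k)"
  proof -
    have "fdiff k G y = cA * fdiff k (kraw N p (n - 1)) y - cB * fdiff k (kraw N p n) y" for k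
      unfolding G_def by (simp only: fdiff_diff fdiff_cmult)
    then show ?thesis
      by (simp add: sum_distrib_left sum_subtractf[symmetric] diff_divide_distrib left_diff_distrib mult.assoc)
  qed
  finally have K: "kernel N p n 0 j x y = fact j / falling (x - y) (j + 1) *
      (cA * (\<Sum>k\<le>j. fdiff k (kraw N p (n - 1)) y / fact k * falling (x - y) k)
        - cB * (\<Sum>k\<le>j. fdiff k (kraw N p n) y / fact k * falling (x - y) k))" .
  show ?thesis
    unfolding K calA_def calB_def nr_def[symmetric] cA_def cB_def
    using nrp fz by (simp add: field_simps)
qed



lemma cs_weighted:
  fixes u v w :: "nat \<Rightarrow> real"
  assumes w: "\<And>k. k \<in> A \<Longrightarrow> w k > 0"
  shows "(\<Sum>k\<in>A. u k * v k / w k)^2 \<le> (\<Sum>k\<in>A. u k * u k / w k) * (\<Sum>k\<in>A. v k * v k / w k)"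
proof -
  define a where "a = (\<Sum>k\<in>A. u k * u k / w k)"
  define b where "b = (\<Sum>k\<in>A. u k * v k / w k)"
  define c where "c = (\<Sum>k\<in>A. v k * v k / w k)"
  have q: "0 \<le> a - 2 * t * b + t * t * c" for t
  proof -
    have "0 \<le> (\<Sum>k\<in>A. (u k - t * v k) * (u k - t * v k) / w k)"
      using w by (intro sum_nonneg) (simp add: less_imp_le)
    also have "(\<Sum>k\<in>A. (u k - t * v k) * (u k - t * v k) / w k)
        = (\<Sum>k\<in>A. u k * u k / w k - 2 * t * (u k * v k / w k) + t * t * (v k * v k / w k))"
      by (rule sum.cong[OF refl]) (simp add: algebra_simps diff_divide_distrib add_divide_distrib)
    also have "\<dots> = a - 2 * t * b + t * t * c"
      unfolding a_def b_def c_def by (simp add: sum.distrib sum_subtractf sum_distrib_left)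
    finally show ?thesis .
  qed
  have c0: "c \<ge> 0" unfolding c_def using w by (intro sum_nonneg) (simp add: less_imp_le)
  show ?thesis
  proof (cases "c = 0")
    case True
    have "b = 0"
    proof (rule ccontr)
      assume b: "b \<noteq> 0"
      have "0 \<le> a - 2 * ((a + 1) / (2 * b)) * b" using q[of "(a + 1) / (2 * b)"] True by simp
      also have "\<dots> = -1" using b by (simp add: field_simps)
      finally show False by simp
    qed
    then show ?thesis using True by (simp add: a_def[symmetric] b_def[symmetric] c_def[symmetric])
  next
    case False
    then have cp: "c > 0" using c0 by simp
    have "0 \<le> a - 2 * (b / c) * b + (b / c) * (b / c) * c" by (rule q)
    also have "\<dots> = a - b^2 / c" using cp by (simp add: field_simps power2_eq_square)
    finally have "b^2 / c \<le> a" by simp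
    then have "b^2 \<le> a * c" using cp by (simp add: field_simps)
    then show ?thesis by (simp add: a_def[symmetric] b_def[symmetric] c_def[symmetric])
  qed
qed

lemma cramer_core:
  fixes a b c d d0 dN lam mu D F1 F2 :: real
  assumes D: "D = (1 + lam * a) * (1 + mu * d) - lam * mu * b * c" and Dn: "D \<noteq> 0"
    and F1: "F1 * D = d0 * (1 + mu * d) - mu * b * dN"
    and F2: "F2 * D = (1 + lam * a) * dN - lam * c * d0"
  shows "d0 - lam * F1 * a - mu * F2 * b = F1" "dN - lam * F1 * c - mu * F2 * d = F2"
proof -
  have "(d0 - lam * F1 * a - mu * F2 * b) * D = d0 * D - lam * a * (F1 * D) - mu * b * (F2 * D)"
    by (simp add: algebra_simps)
  also have "\<dots> = F1 * D" unfolding F1 F2 by (simp add: D algebra_simps)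
  finally show "d0 - lam * F1 * a - mu * F2 * b = F1" using Dn by simp
  have "(dN - lam * F1 * c - mu * F2 * d) * D = dN * D - lam * c * (F1 * D) - mu * d * (F2 * D)"
    by (simp add: algebra_simps)
  also have "\<dots> = F2 * D" unfolding F1 F2 by (simp add: D algebra_simps)
  finally show "dN - lam * F1 * c - mu * F2 * d = F2" using Dn by simp
qed

lemma delta_pos:
  assumes n1: "1 \<le> n" and nN: "n \<le> N" and p0: "0 < p" and p1: "p < 1" and l: "0 < lam" and m: "0 < mu"
  shows "deltaS N p lam mu j n > 0"
proof -
  define u where "u k = fdiff j (kraw N p k) 0" for k
  define v where "v k = fdiff j (kraw N p k) (real N)" for k
  define w where "w k = krawnorm N p k" for k
  have wp: "\<And>k. k \<in> {..<n} \<Longrightarrow> w k > 0" unfolding w_def using norm_pos[OF p0 p1] nN by simp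
  define a where "a = kernel N p n j j 0 0"
  define b where "b = kernel N p n j j 0 (real N)"
  define d where "d = kernel N p n j j (real N) (real N)"
  have a: "a = (\<Sum>k<n. u k * u k / w k)" unfolding a_def kernel_def u_def w_def ..
  have b: "b = (\<Sum>k<n. u k * v k / w k)" unfolding b_def kernel_def u_def v_def w_def ..
  have c: "kernel N p n j j (real N) 0 = b" unfolding b_def kernel_def by (simp add: mult.commute)
  have d: "d = (\<Sum>k<n. v k * v k / w k)" unfolding d_def kernel_def v_def w_def ..
  have a0: "a \<ge> 0" unfolding a using wp by (intro sum_nonneg) (simp add: less_imp_le)
  have d0: "d \<ge> 0" unfolding d using wp by (intro sum_nonneg) (simp add: less_imp_le)
  have cs: "b^2 \<le> a * d" unfolding a b d by (rule cs_weighted[OF wp])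
  have "deltaS N p lam mu j n = 1 + lam * a + mu * d + lam * mu * (a * d - b^2)"
    unfolding deltaS_def a_def[symmetric] b_def[symmetric] c d_def[symmetric]
    by (simp add: algebra_simps power2_eq_square)
  also have "\<dots> \<ge> 1"
    using a0 d0 cs l m by (simp add: add_nonneg_nonneg mult_nonneg_nonneg)
  finally show ?thesis by simp
qed

lemma sob_ip: "sobIP N p lam mu j P r = ip N p (poly P) (poly r)
   + lam * fdiff j (poly P) 0 * fdiff j (poly r) 0 + mu * fdiff j (poly P) (real N) * fdiff j (poly r) (real N)"
  unfolding sobIP_def ip_def ..

lemma sob_diff:
  "sobIP N p lam mu j (q - P) r = sobIP N p lam mu j q r - sobIP N p lam mu j P r"
proof -
  have e: "poly (q - P) = (\<lambda>x. poly q x - poly P x)" by (rule ext) simp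
  show ?thesis unfolding sob_ip ip_diff_left unfolding e fdiff_diff
    by (simp add: algebra_simps)
qed



lemma KS_poly:
  assumes n1: "1 \<le> n" and nN: "n \<le> N" and p0: "0 < p" and p1: "p < 1" and l0: "0 < lam" and m0: "0 < mu"
  shows "poly (KS N p lam mu j n) x = kraw N p n x - lam * Phi1 N p lam mu j n * kernel N p n 0 j x 0
            - mu * Phi2 N p lam mu j n * kernel N p n 0 j x (real N)"
proof -
  have pn0: "p \<noteq> 0" using p0 by simp
  define F1 where "F1 = Phi1 N p lam mu j n"
  define F2 where "F2 = Phi2 N p lam mu j n"
  define KJ where "KJ y = (\<Sum>k<n. smult (fdiff j (kraw N p k) y / krawnorm N p k) (kp N p k))" for y
  define P where "P = kp N p n - smult (lam * F1) (KJ 0) - smult (mu * F2) (KJ (real N))"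
  have polyKJ': "poly (KJ y) = (\<lambda>x. \<Sum>k<n. (fdiff j (kraw N p k) y / krawnorm N p k) * kraw N p k x)" for y
    by (rule ext) (simp add: KJ_def poly_sum poly_kp)
  have polyKJ: "poly (KJ y) = (\<lambda>x. kernel N p n 0 j x y)" for y
    unfolding polyKJ' by (rule ext) (simp add: kernel_def mult.commute)
  have fdKJ: "fdiff j (poly (KJ y)) z = kernel N p n j j z y" for y z
    unfolding polyKJ' by (simp only: fdiff_sum fdiff_cmult) (simp add: kernel_def mult.commute)
  have lowKJ: "lowdeg (KJ y) n" for y
    unfolding KJ_def
    by (intro lowdeg_sum lowdeg_smult) (auto intro: lowdeg_mono[OF kp_lowdeg])
  have polyP: "poly P = (\<lambda>x. (kraw N p n x - (lam * F1) * poly (KJ 0) x) - (mu * F2) * poly (KJ (real N)) x)"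
    by (rule ext) (simp add: P_def poly_kp)
  have fdP: "fdiff j (poly P) z = fdiff j (kraw N p n) z - lam * F1 * kernel N p n j j z 0
              - mu * F2 * kernel N p n j j z (real N)" for z
    unfolding polyP fdiff_diff fdiff_cmult fdKJ by simp
  have dpos: "deltaS N p lam mu j n \<noteq> 0" using delta_pos[OF n1 nN p0 p1 l0 m0, where j=j] by linarith
  have cr: "fdiff j (kraw N p n) 0 - lam * F1 * kernel N p n j j 0 0 - mu * F2 * kernel N p n j j 0 (real N) = F1"
           "fdiff j (kraw N p n) (real N) - lam * F1 * kernel N p n j j (real N) 0 - mu * F2 * kernel N p n j j (real N) (real N) = F2"
  proof -
    have F1D: "F1 * deltaS N p lam mu j n = fdiff j (kraw N p n) 0 * (1 + mu * kernel N p n j j (real N) (real N))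
      - mu * kernel N p n j j 0 (real N) * fdiff j (kraw N p n) (real N)"
      unfolding F1_def Phi1_def using dpos by simp
    have F2D: "F2 * deltaS N p lam mu j n = (1 + lam * kernel N p n j j 0 0) * fdiff j (kraw N p n) (real N)
      - lam * kernel N p n j j (real N) 0 * fdiff j (kraw N p n) 0"
      unfolding F2_def Phi2_def using dpos by simp
    note c = cramer_core[where D = "deltaS N p lam mu j n", OF deltaS_def dpos F1D F2D]
    show "fdiff j (kraw N p n) 0 - lam * F1 * kernel N p n j j 0 0 - mu * F2 * kernel N p n j j 0 (real N) = F1"
      by (rule c(1))
    show "fdiff j (kraw N p n) (real N) - lam * F1 * kernel N p n j j (real N) 0 - mu * F2 * kernel N p n j j (real N) (real N) = F2"
      by (rule c(2))
  qed
  have fdP0: "fdiff j (poly P) 0 = F1" using fdP[of 0] cr(1) by simp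
  have fdPN: "fdiff j (poly P) (real N) = F2" using fdP[of "real N"] cr(2) by simp
  have ipP: "ip N p (poly P) (poly r) = - lam * F1 * fdiff j (poly r) 0 - mu * F2 * fdiff j (poly r) (real N)"
    if r: "lowdeg r n" for r
  proof -
    have "ip N p (poly P) (poly r) = ip N p (kraw N p n) (poly r) - lam * F1 * ip N p (poly (KJ 0)) (poly r)
            - mu * F2 * ip N p (poly (KJ (real N))) (poly r)"
      unfolding P_def ip_diff_left ip_smult_left poly_kp ..
    also have "\<dots> = - lam * F1 * fdiff j (poly r) 0 - mu * F2 * fdiff j (poly r) (real N)"
      unfolding polyKJ reprod[OF r nN p0 p1] orth_low[OF r nN pn0] by simp
    finally show ?thesis .
  qed
  have sobP: "sobIP N p lam mu j P r = 0" if "degree r < n" for r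
  proof -
    have r: "lowdeg r n" using that by (rule lowdeg_degree)
    show ?thesis unfolding sob_ip ipP[OF r] fdP0 fdPN by simp
  qed
  have coeffP: "coeff P n = 1"
  proof -
    have "coeff (KJ y) n = 0" for y using lowKJ[of y] by (simp add: lowdeg_def)
    then show ?thesis unfolding P_def using kp_lead[OF nN pn0] by simp
  qed
  have lowP: "lowdeg P (Suc n)"
    unfolding P_def by (intro lowdeg_diff lowdeg_smult kp_lowdeg lowdeg_mono[OF lowKJ]) simp_all
  have degP: "degree P = n"
  proof (rule antisym)
    show "degree P \<le> n" using lowdeg_imp_degree[OF lowP] by simp
    show "n \<le> degree P" using coeffP by (intro le_degree) simp
  qed
  have leadP: "lead_coeff P = 1" using degP coeffP by simp
  have KSP: "KS N p lam mu j n = P"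
    unfolding KS_def
  proof (rule the_equality)
    show "degree P = n \<and> lead_coeff P = 1 \<and> (\<forall>r. degree r < n \<longrightarrow> sobIP N p lam mu j P r = 0)"
      using degP leadP sobP by blast
  next
    fix q assume q: "degree q = n \<and> lead_coeff q = 1 \<and> (\<forall>r. degree r < n \<longrightarrow> sobIP N p lam mu j q r = 0)"
    define d where "d = q - P"
    have lowd: "lowdeg d n" unfolding lowdeg_def
    proof (intro allI impI)
      fix i assume i: "n \<le> i"
      show "coeff d i = 0"
      proof (cases "i = n")
        case True
        have "coeff q n = 1" using q by metis
        then show ?thesis using True coeffP by (simp add: d_def)
      next
        case False
        then have "Suc n \<le> i" using i by simp
        moreover have "coeff q i = 0" using q False i by (intro coeff_eq_0) simp
        ultimately show ?thesis using lowP by (simp add: d_def lowdeg_def)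
      qed
    qed
    have degd: "degree d < n" using lowdeg_imp_degree[OF lowd n1] .
    have "sobIP N p lam mu j d d = 0"
      unfolding d_def sob_diff using q sobP[OF degd[unfolded d_def]] degd by (simp add: d_def)
    then have z: "ip N p (poly d) (poly d) + lam * (fdiff j (poly d) 0)^2 + mu * (fdiff j (poly d) (real N))^2 = 0"
      unfolding sob_ip by (simp add: power2_eq_square mult.assoc)
    have nn: "ip N p (poly d) (poly d) \<ge> 0" by (rule ip_self_nonneg[OF p0 p1])
    have iz: "ip N p (poly d) (poly d) = 0"
      using z nn l0 m0 by (smt (verit) mult_pos_pos zero_le_power2 mult_nonneg_nonneg)
    have "d = 0"
    proof (rule zero_poly)
      show "lowdeg d (Suc N)" by (rule lowdeg_mono[OF lowd]) (use nN in simp)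
      show "poly d (real x) = 0" if "x \<le> N" for x using ip_self_zero[OF p0 p1 iz that] .
    qed
    then show "q = P" by (simp add: d_def)
  qed
  show ?thesis unfolding KSP polyP polyKJ F1_def F2_def by simp
qed

theorem mainTheorem3:
  fixes N n j :: nat and p lam mu x :: real
  assumes "1 \<le> N" and "0 < p" and "p < 1" and "0 < lam" and "0 < mu"
    and "1 \<le> n" and "n \<le> N"
    and "falling x (j + 1) \<noteq> 0" and "falling (x - real N) (j + 1) \<noteq> 0"
    and "calD1 N p lam mu j n x \<noteq> 0"
    and "\<forall>i<n. (real n * p * real (N - n + 1) * calC1 N p lam mu j n x / calD1 N p lam mu j n x
                 - real n + 1) - 1 \<noteq> - real i"
  shows "(let f = real n * p * real (N - n + 1) * calC1 N p lam mu j n x / calD1 N p lam mu j n x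
                 - real n + 1;
              h = - (p * real (N - n + 1) * calC1 N p lam mu j n x - calD1 N p lam mu j n x)
          in poly (KS N p lam mu j n) x =
             p ^ (n - 1) * pochhammer (- real N) (n - 1) * h *
             (\<Sum>k\<le>n. pochhammer (- real n) k * pochhammer (- x) k * pochhammer f k
                      / (pochhammer (- real N) k * pochhammer (f - 1) k) * (1 / p) ^ k / fact k))"
proof -
  note a = assms
  have pn0: "p \<noteq> 0" using a(2) by simp
  have f0: "falling (x - 0) (j + 1) \<noteq> 0" using a(8) by simp
  have K0: "kernel N p n 0 j x 0 = calA N p j n x 0 * kraw N p n x + calB N p j n x 0 * kraw N p (n - 1) x"
    by (rule kernel0j[OF a(6) a(7) a(2) a(3) f0])
  have KN: "kernel N p n 0 j x (real N) = calA N p j n x (real N) * kraw N p n x + calB N p j n x (real N) * kraw N p (n - 1) x"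
    by (rule kernel0j[OF a(6) a(7) a(2) a(3) a(9)])
  have KSx: "poly (KS N p lam mu j n) x = calC1 N p lam mu j n x * kraw N p n x + calD1 N p lam mu j n x * kraw N p (n - 1) x"
    unfolding KS_poly[OF a(6) a(7) a(2) a(3) a(4) a(5)] K0 KN calC1_def calD1_def by (simp add: algebra_simps)
  have H: "calC1 N p lam mu j n x * kraw N p n x + calD1 N p lam mu j n x * kraw N p (n - 1) x =
    (let f = real n * p * real (N - n + 1) * calC1 N p lam mu j n x / calD1 N p lam mu j n x - real n + 1;
         h = - (p * real (N - n + 1) * calC1 N p lam mu j n x - calD1 N p lam mu j n x)
     in p ^ (n - 1) * pochhammer (- real N) (n - 1) * h *
       (\<Sum>k\<le>n. pochhammer (- real n) k * pochhammer (- x) k * pochhammer f k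
                / (pochhammer (- real N) k * pochhammer (f - 1) k) * (1 / p) ^ k / fact k))"
    by (rule hyp_part[OF a(6) a(7) pn0 a(10) a(11)])
  show ?thesis using KSx H unfolding Let_def by simp
qed


end
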